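(* Let $X,Y,Z$ be random variables on finite alphabets $\mathcal{X},\mathcal{Y},\mathcal{Z}$ with a given joint distribution. For each $y\in\mathcal{Y}$ with $\Pr(Y=y)>0$, let $(A_y,B_y,C_y)$ be the random triple on $\mathcal{X}\times\mathcal{Y}\times\mathcal{Z}$ defined by $$\Pr(A_y=x,B_y=y',C_y=z)=\begin{cases}0 & \text{if } \Pr(Z=z)=0,\\ \dfrac{\Pr(X=x,Y=y',Z=z)\,\Pr(Z=z\mid Y=y)}{\Pr(Z=z)} & \text{otherwise.}\end{cases}$$ Then $$H(X\mid Z)=\sum_{y\in\mathcal{Y},\,\Pr(Y=y)>0}\Pr(Y=y)\,H(A_y\mid C_y).$$
   Context: $H$ denotes Shannon entropy. The triple $(A_y,B_y,C_y)$ is the paper's "do-operation" applied to the joint distribution of $(X,Y,Z)$ with the distribution of $Z$ given $Y=y$ as the new target marginal. *)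

theory Defs
  imports "HOL-Probability.Probability_Mass_Function"
begin

definition marg_Y :: "('x::finite \<times> 'y::finite \<times> 'z::finite) pmf \<Rightarrow> 'y \<Rightarrow> real" where
  "marg_Y P y = (\<Sum>x\<in>UNIV. \<Sum>z\<in>UNIV. pmf P (x, y, z))"

definition marg_Z :: "('x::finite \<times> 'y::finite \<times> 'z::finite) pmf \<Rightarrow> 'z \<Rightarrow> real" where
  "marg_Z P z = (\<Sum>x\<in>UNIV. \<Sum>y\<in>UNIV. pmf P (x, y, z))"

definition marg_YZ :: "('x::finite \<times> 'y::finite \<times> 'z::finite) pmf \<Rightarrow> 'y \<Rightarrow> 'z \<Rightarrow> real" where
  "marg_YZ P y z = (\<Sum>x\<in>UNIV. pmf P (x, y, z))"

definition marg_XZ :: "('x::finite \<times> 'y::finite \<times> 'z::finite) pmf \<Rightarrow> 'x \<Rightarrow> 'z \<Rightarrow> real" where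
  "marg_XZ P x z = (\<Sum>y\<in>UNIV. pmf P (x, y, z))"

definition cond_entropy :: "('a::finite \<Rightarrow> 'c::finite \<Rightarrow> real) \<Rightarrow> real" where
  "cond_entropy f = - (\<Sum>a\<in>UNIV. \<Sum>c\<in>UNIV. if f a c = 0 then 0
                          else f a c * log 2 (f a c / (\<Sum>a'\<in>UNIV. f a' c)))"

definition do_op :: "('x::finite \<times> 'y::finite \<times> 'z::finite) pmf \<Rightarrow> 'y \<Rightarrow> 'x \<Rightarrow> 'y \<Rightarrow> 'z \<Rightarrow> real" where
  "do_op P y x y' z = (if marg_Z P z = 0 then 0
      else pmf P (x, y', z) * (marg_YZ P y z / marg_Y P y) / marg_Z P z)"

end

theory Submission
  imports Defs
begin

lemma XZ_nonneg: "marg_XZ P x z \<ge> 0"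
  unfolding marg_XZ_def by (simp add: sum_nonneg)

lemma YZ_nonneg: "marg_YZ P y z \<ge> 0"
  unfolding marg_YZ_def by (simp add: sum_nonneg)

lemma Z_XZ: "marg_Z P z = (\<Sum>x\<in>UNIV. marg_XZ P x z)"
  unfolding marg_Z_def marg_XZ_def ..

lemma Z_YZ: "marg_Z P z = (\<Sum>y\<in>UNIV. marg_YZ P y z)"
  unfolding marg_Z_def marg_YZ_def by (rule sum.swap)

lemma Y_YZ: "marg_Y P y = (\<Sum>z\<in>UNIV. marg_YZ P y z)"
  unfolding marg_Y_def marg_YZ_def by (rule sum.swap)

lemma XZ_le_Z: "marg_XZ P x z \<le> marg_Z P z"
  unfolding Z_XZ by (rule member_le_sum) (auto simp: XZ_nonneg)

lemma YZ_le_Y: "marg_YZ P y z \<le> marg_Y P y"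
  unfolding Y_YZ by (rule member_le_sum) (auto simp: YZ_nonneg)

lemma f_eq: "(\<Sum>y'\<in>UNIV. do_op P y x y' z) =
   (if marg_Z P z = 0 then 0 else marg_XZ P x z * (marg_YZ P y z / marg_Y P y) / marg_Z P z)"
  unfolding do_op_def marg_XZ_def
  by (simp add: sum_divide_distrib sum_distrib_right)

lemma fsum_eq: "(\<Sum>a\<in>UNIV. \<Sum>y'\<in>UNIV. do_op P y a y' z) =
   (if marg_Z P z = 0 then 0 else marg_YZ P y z / marg_Y P y)"
proof -
  have "(\<Sum>a\<in>UNIV. \<Sum>y'\<in>UNIV. do_op P y a y' z) =
     (if marg_Z P z = 0 then 0 else (\<Sum>a\<in>UNIV. marg_XZ P a z) * (marg_YZ P y z / marg_Y P y) / marg_Z P z)"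
    by (simp add: f_eq sum_divide_distrib sum_distrib_right)
  then show ?thesis by (simp add: Z_XZ[symmetric])
qed

lemma per_y:
  assumes "marg_Y P y > 0"
  shows "cond_entropy (\<lambda>x z. \<Sum>y'\<in>UNIV. do_op P y x y' z) =
    - (\<Sum>x\<in>UNIV. \<Sum>z\<in>UNIV. if marg_XZ P x z = 0 then 0 else
        marg_XZ P x z * (marg_YZ P y z / marg_Y P y / marg_Z P z) * log 2 (marg_XZ P x z / marg_Z P z))"
  unfolding cond_entropy_def fsum_eq
proof (intro arg_cong[where f=uminus] sum.cong refl)
  fix x z
  show "(if (\<Sum>y'\<in>UNIV. do_op P y x y' z) = 0 then 0
         else (\<Sum>y'\<in>UNIV. do_op P y x y' z) * log 2 ((\<Sum>y'\<in>UNIV. do_op P y x y' z) /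
            (if marg_Z P z = 0 then 0 else marg_YZ P y z / marg_Y P y))) =
        (if marg_XZ P x z = 0 then 0 else
        marg_XZ P x z * (marg_YZ P y z / marg_Y P y / marg_Z P z) * log 2 (marg_XZ P x z / marg_Z P z))"
  proof (cases "marg_XZ P x z = 0")
    case True then show ?thesis by (simp add: f_eq)
  next
    case False
    have pz: "marg_Z P z > 0" using False XZ_nonneg[of P x z] XZ_le_Z[of P x z] by linarith
    show ?thesis
    proof (cases "marg_YZ P y z = 0")
      case True then show ?thesis using pz False by (simp add: f_eq)
    next
      case F2: False
      have "marg_XZ P x z * (marg_YZ P y z / marg_Y P y) / marg_Z P z / (marg_YZ P y z / marg_Y P y)
          = marg_XZ P x z / marg_Z P z" using F2 assms by (simp add: field_simps)
      then show ?thesis using pz False F2 assms by (simp add: f_eq)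
    qed
  qed
qed

theorem lemma1:
  fixes P :: "('x::finite \<times> 'y::finite \<times> 'z::finite) pmf"
  shows "cond_entropy (marg_XZ P) =
    (\<Sum>y\<in>{y. marg_Y P y > 0}. marg_Y P y * cond_entropy (\<lambda>x z. \<Sum>y'\<in>UNIV. do_op P y x y' z))"
proof -
  let ?S = "{y. marg_Y P y > 0}"
  let ?L = "\<lambda>x z. if marg_XZ P x z = 0 then 0 else marg_XZ P x z * log 2 (marg_XZ P x z / marg_Z P z)"
  have step: "marg_Y P y * cond_entropy (\<lambda>x z. \<Sum>y'\<in>UNIV. do_op P y x y' z) =
     - (\<Sum>x\<in>UNIV. \<Sum>z\<in>UNIV. (marg_YZ P y z / marg_Z P z) * ?L x z)" if "y \<in> ?S" for y
  proof -
    have py: "marg_Y P y > 0" using that by simp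
    show ?thesis unfolding per_y[OF py]
      using py by (auto simp add: sum_distrib_left intro!: sum.cong)
  qed
  have sumy: "(\<Sum>y\<in>?S. marg_YZ P y z / marg_Z P z) = 1" if "marg_Z P z > 0" for z
  proof -
    have "(\<Sum>y\<in>?S. marg_YZ P y z) = (\<Sum>y\<in>UNIV. marg_YZ P y z)"
    proof (rule sum.mono_neutral_left)
      show "\<forall>i\<in>UNIV - ?S. marg_YZ P i z = 0"
      proof
        fix i assume "i \<in> UNIV - ?S"
        then have "marg_Y P i \<le> 0" by simp
        then show "marg_YZ P i z = 0" using YZ_nonneg[of P i z] YZ_le_Y[of P i z] by linarith
      qed
    qed auto
    then show ?thesis using that by (simp add: sum_divide_distrib[symmetric] Z_YZ[symmetric])
  qed
  have pointwise: "(\<Sum>y\<in>?S. (marg_YZ P y z / marg_Z P z) * ?L x z) = ?L x z" for x z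
  proof (cases "marg_XZ P x z = 0")
    case True then show ?thesis by simp
  next
    case False
    have pz: "marg_Z P z > 0" using False XZ_nonneg[of P x z] XZ_le_Z[of P x z] by linarith
    show ?thesis by (simp only: sum_distrib_right[symmetric] sumy[OF pz])
  qed
  have "(\<Sum>y\<in>?S. marg_Y P y * cond_entropy (\<lambda>x z. \<Sum>y'\<in>UNIV. do_op P y x y' z))
      = (\<Sum>y\<in>?S. - (\<Sum>x\<in>UNIV. \<Sum>z\<in>UNIV. (marg_YZ P y z / marg_Z P z) * ?L x z))"
    by (rule sum.cong) (auto simp: step)
  also have "\<dots> = - (\<Sum>x\<in>UNIV. \<Sum>z\<in>UNIV. \<Sum>y\<in>?S. (marg_YZ P y z / marg_Z P z) * ?L x z)"
    by (simp add: sum_negf sum.swap[of _ ?S] sum.swap[of _ ?S UNIV])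
  also have "\<dots> = - (\<Sum>x\<in>UNIV. \<Sum>z\<in>UNIV. ?L x z)"
    by (simp only: pointwise)
  also have "\<dots> = cond_entropy (marg_XZ P)"
    unfolding cond_entropy_def Z_XZ ..
  finally show ?thesis by simp
qed

end
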